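(* Assume Assumption 1 and that there are reals $\xi_i$, $i\in M$, with ${\bf A}^i=\xi_i{\bf I}$ for all $i\in M$. Assume $d^*=\min_{j\in N}D_{jj}$ is attained at the unique index $j_1$. Then the Shor relaxation (S) is exact, i.e. $v^\star=c^\star$, if there are no $\boldsymbol{\mu}\in\mathbb{R}^m$ and $x_{j_1},z_{j_1}\in\mathbb{R}$ satisfying: $d^*+\sum_{i\in M}\mu_i\xi_i=0$; $c_{j_1}+\sum_{i\in M}\mu_ia_{ij_1}=0$; for all $i\in M$: $\xi_iz_{j_1}+\sum_{j\ne j_1}\xi_i\Big(\frac{c_j+\sum_{l\in M}\mu_la_{lj}}{D_{jj}-d^*}\Big)^2+2a_{ij_1}x_{j_1}-2\sum_{j\ne j_1}a_{ij}\frac{c_j+\sum_{l\in M}\mu_la_{lj}}{D_{jj}-d^*}\le b_i$; $x_{j_1}^2\le z_{j_1}$; $\mu_i\ge 0$ for all $i\in M$.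
   Context: Let $N=\{1,\dots,n\}$ and $M=\{1,\dots,m\}$. Let ${\bf D}$ and ${\bf A}^i$ ($i\in M$) be real diagonal $n\times n$ matrices, ${\bf c},{\bf a}_i\in\mathbb{R}^n$ ($a_{ij}$ denotes the $j$-th entry of ${\bf a}_i$) and $b_i\in\mathbb{R}$. The diagonal QCQP is (P): $c^\star=\inf\{{\bf x}^\top{\bf D}{\bf x}+2{\bf c}^\top{\bf x} : {\bf x}^\top{\bf A}^i{\bf x}+2{\bf a}_i^\top{\bf x}\le b_i,\ i\in M\}$. Its Shor relaxation is (S): $v^\star=\inf\{{\bf D}\bullet{\bf X}+2{\bf c}^\top{\bf x} : {\bf A}^i\bullet{\bf X}+2{\bf a}_i^\top{\bf x}\le b_i\ (i\in M),\ {\bf X}-{\bf x}{\bf x}^\top\succeq {\bf O}\}$, where ${\bf P}\bullet{\bf Q}=\mathrm{trace}({\bf P}{\bf Q})$. Assumption 1: (i) the feasible region of (P) is nonempty; (ii) there exists $\bar{\bf y}\ge 0$ with $\sum_{i\in M}\bar y_i{\bf A}^i\succ{\bf O}$; (iii) the feasible region of (S) has nonempty interior. *)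

theory Defs
  imports "HOL-Analysis.Analysis"
begin

definition frob :: "real^'n^'n \<Rightarrow> real^'n^'n \<Rightarrow> real" where
  "frob P Q = trace (P ** Q)"

definition diagonal_mat :: "real^'n^'n \<Rightarrow> bool" where
  "diagonal_mat P \<longleftrightarrow> (\<forall>i j. i \<noteq> j \<longrightarrow> P $ i $ j = 0)"

definition symmetric_mat :: "real^'n^'n \<Rightarrow> bool" where
  "symmetric_mat P \<longleftrightarrow> transpose P = P"

definition psd :: "real^'n^'n \<Rightarrow> bool" where
  "psd P \<longleftrightarrow> symmetric_mat P \<and> (\<forall>v. 0 \<le> v \<bullet> (P *v v))"

definition pd :: "real^'n^'n \<Rightarrow> bool" where
  "pd P \<longleftrightarrow> symmetric_mat P \<and> (\<forall>v. v \<noteq> 0 \<longrightarrow> 0 < v \<bullet> (P *v v))"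

definition outer :: "real^'n \<Rightarrow> real^'n \<Rightarrow> real^'n^'n" where
  "outer x y = (\<chi> i j. x $ i * y $ j)"

definition qf :: "real^'n^'n \<Rightarrow> real^'n \<Rightarrow> real^'n \<Rightarrow> real" where
  "qf P q x = x \<bullet> (P *v x) + 2 * (q \<bullet> x)"

definition feasP :: "('m \<Rightarrow> real^'n^'n) \<Rightarrow> ('m \<Rightarrow> real^'n) \<Rightarrow> ('m \<Rightarrow> real) \<Rightarrow> (real^'n) set" where
  "feasP A a b = {x. \<forall>i. qf (A i) (a i) x \<le> b i}"

definition cstar :: "real^'n^'n \<Rightarrow> real^'n \<Rightarrow> ('m \<Rightarrow> real^'n^'n) \<Rightarrow> ('m \<Rightarrow> real^'n) \<Rightarrow> ('m \<Rightarrow> real) \<Rightarrow> ereal" where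
  "cstar D c A a b = (INF x \<in> feasP A a b. ereal (qf D c x))"

definition feasS :: "('m \<Rightarrow> real^'n^'n) \<Rightarrow> ('m \<Rightarrow> real^'n) \<Rightarrow> ('m \<Rightarrow> real) \<Rightarrow> ((real^'n^'n) \<times> (real^'n)) set" where
  "feasS A a b = {(X, x). symmetric_mat X \<and> (\<forall>i. frob (A i) X + 2 * (a i \<bullet> x) \<le> b i)
                        \<and> psd (X - outer x x)}"

definition vstar :: "real^'n^'n \<Rightarrow> real^'n \<Rightarrow> ('m \<Rightarrow> real^'n^'n) \<Rightarrow> ('m \<Rightarrow> real^'n) \<Rightarrow> ('m \<Rightarrow> real) \<Rightarrow> ereal" where
  "vstar D c A a b = (INF p \<in> feasS A a b. ereal (frob D (fst p) + 2 * (c \<bullet> snd p)))"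

text \<open>Nonempty interior of the feasible region of (S), interior taken in the space
  of (symmetric matrix, vector) pairs.\<close>
definition feasS_nonempty_interior :: "('m \<Rightarrow> real^'n^'n) \<Rightarrow> ('m \<Rightarrow> real^'n) \<Rightarrow> ('m \<Rightarrow> real) \<Rightarrow> bool" where
  "feasS_nonempty_interior A a b \<longleftrightarrow>
     (\<exists>X0 x0 e. e > 0 \<and> (X0, x0) \<in> feasS A a b \<and>
        (\<forall>X x. symmetric_mat X \<and> dist X X0 < e \<and> dist x x0 < e \<longrightarrow> (X, x) \<in> feasS A a b))"

definition assumption1 :: "('m::finite \<Rightarrow> real^'n^'n) \<Rightarrow> ('m \<Rightarrow> real^'n) \<Rightarrow> ('m \<Rightarrow> real) \<Rightarrow> bool" where
  "assumption1 A a b \<longleftrightarrow>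
     feasP A a b \<noteq> {} \<and>
     (\<exists>y::'m \<Rightarrow> real. (\<forall>i. y i \<ge> 0) \<and> pd (\<Sum>i\<in>UNIV. y i *\<^sub>R A i)) \<and>
     feasS_nonempty_interior A a b"

end

theory Submission
  imports Defs
begin


lemma cone_sum_in_hull:
  fixes g :: "'m::finite \<Rightarrow> 'a::euclidean_space"
  assumes "\<forall>i. \<mu> i \<ge> 0"
  shows "(\<Sum>i\<in>S. \<mu> i *\<^sub>R g i) \<in> convex_cone hull (range g)"
proof (induction S rule: infinite_finite_induct)
  case (infinite A) then show ?case by (simp add: convex_cone_hull_contains_0)
next
  case empty then show ?case by (simp add: convex_cone_hull_contains_0)
next
  case (insert x F)
  have "\<mu> x *\<^sub>R g x \<in> convex_cone hull (range g)"
    by (rule convex_cone_hull_mul) (auto simp: hull_inc assms)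
  then show ?case using insert by (simp add: convex_cone_hull_add)
qed

lemma farkas_alt:
  fixes g :: "'m::finite \<Rightarrow> 'a::euclidean_space" and z :: 'a
  assumes nz: "\<not> (\<exists>\<mu>. (\<forall>i. \<mu> i \<ge> 0) \<and> z = (\<Sum>i\<in>UNIV. \<mu> i *\<^sub>R g i))"
  shows "\<exists>e. (\<forall>i. inner e (g i) \<le> 0) \<and> inner e z > 0"
proof -
  define K where "K = {(\<Sum>i\<in>UNIV. \<mu> i *\<^sub>R g i) | \<mu>. \<forall>i. \<mu> i \<ge> 0}"
  have KH: "K = convex_cone hull (range g)"
  proof
    show "K \<subseteq> convex_cone hull (range g)" unfolding K_def using cone_sum_in_hull by blast
    show "convex_cone hull (range g) \<subseteq> K"
    proof (rule hull_minimal)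
      show "range g \<subseteq> K"
      proof
        fix y assume "y \<in> range g"
        then obtain k where k: "y = g k" by auto
        have e: "(\<Sum>i\<in>UNIV. (if i = k then 1 else 0) *\<^sub>R g i) = g k"
        proof -
          have "(\<Sum>i\<in>UNIV. (if i = k then 1 else 0) *\<^sub>R g i) = (\<Sum>i\<in>UNIV. (if i = k then g i else 0))"
            by (rule sum.cong) auto
          then show ?thesis by simp
        qed
        show "y \<in> K" unfolding K_def k
          by (rule CollectI, rule exI[of _ "\<lambda>i. if i = k then 1 else 0"]) (simp only: e, simp)
      qed
      show "convex_cone K"
        unfolding convex_cone_iff
      proof (intro conjI ballI allI impI)
        show "0 \<in> K" unfolding K_def by (rule CollectI, rule exI[of _ "\<lambda>_. 0"]) simp
        fix x y assume "x \<in> K" "y \<in> K"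
        then obtain \<mu> \<nu> where "\<forall>i. \<mu> i \<ge> 0" "x = (\<Sum>i\<in>UNIV. \<mu> i *\<^sub>R g i)"
          "\<forall>i. \<nu> i \<ge> 0" "y = (\<Sum>i\<in>UNIV. \<nu> i *\<^sub>R g i)" unfolding K_def by auto
        then show "x + y \<in> K" unfolding K_def
          by (intro CollectI exI[of _ "\<lambda>i. \<mu> i + \<nu> i"]) (auto simp: sum.distrib scaleR_add_left)
      next
        fix x and c :: real assume "x \<in> K" "0 \<le> c"
        then obtain \<mu> where "\<forall>i. \<mu> i \<ge> 0" "x = (\<Sum>i\<in>UNIV. \<mu> i *\<^sub>R g i)"
          unfolding K_def by auto
        then show "c *\<^sub>R x \<in> K" unfolding K_def using \<open>0 \<le> c\<close>
          by (intro CollectI exI[of _ "\<lambda>i. c * \<mu> i"]) (auto simp: scaleR_sum_right)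
      qed
    qed
  qed
  have "closed K"
  proof -
    have "polytope (convex hull (range g))" unfolding polytope_def by (intro exI[of _ "range g"]) simp
    then have "closed (conic hull (convex hull (range g)))"
      using closed_conic_hull_strong by blast
    then show ?thesis unfolding KH convex_cone_hull_separate by simp
  qed
  moreover have "convex K" unfolding KH by (rule convex_convex_cone_hull)
  moreover have "z \<notin> K" using nz unfolding K_def by auto
  ultimately obtain a b where ab: "inner a z < b" "\<forall>x\<in>K. inner a x > b"
    using separating_hyperplane_closed_point by blast
  have "0 \<in> K" unfolding KH by (rule convex_cone_hull_contains_0)
  with ab have b0: "b < 0" by auto
  have "inner a (g i) \<ge> 0" for i
  proof (rule ccontr)
    assume neg: "\<not> inner a (g i) \<ge> 0"
    define t where "t = b / inner a (g i)"
    have t0: "t \<ge> 0" unfolding t_def using neg b0 by (simp add: divide_nonpos_neg)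
    have "t *\<^sub>R g i \<in> K" unfolding KH
      by (rule convex_cone_hull_mul) (auto simp: hull_inc t0)
    then have "inner a (t *\<^sub>R g i) > b" using ab by auto
    moreover have "inner a (t *\<^sub>R g i) = b" unfolding t_def using neg by simp
    ultimately show False by simp
  qed
  then show ?thesis using ab b0
    by (intro exI[of _ "-a"]) auto
qed


lemma diag_entry: "diagonal_mat P \<Longrightarrow> P $ i $ k = (if k = i then P $ i $ i else 0)"
  unfolding diagonal_mat_def by auto

lemma frob_diag:
  assumes "diagonal_mat P"
  shows "frob P X = (\<Sum>j\<in>UNIV. P $ j $ j * X $ j $ j)"
proof -
  have "frob P X = (\<Sum>i\<in>UNIV. \<Sum>k\<in>UNIV. P $ i $ k * X $ k $ i)"
    unfolding frob_def trace_def matrix_matrix_mult_def by simp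
  also have "\<dots> = (\<Sum>i\<in>UNIV. \<Sum>k\<in>UNIV. if k = i then P $ i $ i * X $ i $ i else 0)"
    by (intro sum.cong refl) (subst diag_entry[OF assms], auto)
  also have "\<dots> = (\<Sum>j\<in>UNIV. P $ j $ j * X $ j $ j)" by simp
  finally show ?thesis .
qed

lemma quad_diag:
  assumes "diagonal_mat P"
  shows "x \<bullet> (P *v x) = (\<Sum>j\<in>UNIV. P $ j $ j * (x $ j)\<^sup>2)"
proof -
  have "x \<bullet> (P *v x) = (\<Sum>i\<in>UNIV. x $ i * (\<Sum>k\<in>UNIV. P $ i $ k * x $ k))"
    unfolding inner_vec_def matrix_vector_mult_def by simp
  also have "\<dots> = (\<Sum>i\<in>UNIV. x $ i * (\<Sum>k\<in>UNIV. if k = i then P $ i $ i * x $ i else 0))"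
    by (intro sum.cong refl arg_cong2[where f=times] ) (subst diag_entry[OF assms], auto)
  also have "\<dots> = (\<Sum>j\<in>UNIV. P $ j $ j * (x $ j)\<^sup>2)" by (simp add: power2_eq_square algebra_simps)
  finally show ?thesis .
qed

lemma psd_diag_nonneg:
  fixes M :: "real^'n^'n"
  assumes "psd M" shows "M $ j $ j \<ge> 0"
proof -
  have "0 \<le> axis j 1 \<bullet> (M *v axis j 1)" using assms unfolding psd_def by blast
  also have "axis j (1::real) \<bullet> (M *v axis j 1) = M $ j $ j"
    proof -
      have a: "axis j (1::real) \<bullet> v = v $ j" for v :: "real^'n"
        by (simp add: inner_commute inner_axis)
      have "(\<Sum>k\<in>UNIV. M $ j $ k * axis j 1 $ k) = (\<Sum>k\<in>UNIV. if k = j then M $ j $ j else 0)"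
        by (rule sum.cong) (auto simp: axis_def)
      then show ?thesis by (simp add: a matrix_vector_mult_def)
    qed
  finally show ?thesis .
qed

lemma scalar_diag: "diagonal_mat ((\<xi>::real) *\<^sub>R mat 1 :: real^'n^'n)"
  unfolding diagonal_mat_def by (simp add: mat_def)

lemma scalar_entry: "((\<xi>::real) *\<^sub>R mat 1 :: real^'n^'n) $ j $ j = \<xi>"
  by (simp add: mat_def)

lemma inner_self_sum: "(x::real^'n) \<bullet> x = (\<Sum>j\<in>UNIV. (x $ j)\<^sup>2)"
  by (simp add: inner_vec_def power2_eq_square)



lemma bounded_region:
  fixes a :: "'m::finite \<Rightarrow> real^'n" and b \<xi> y :: "'m \<Rightarrow> real"
  assumes y0: "\<forall>i. y i \<ge> 0" and eta: "(\<Sum>i\<in>UNIV. y i * \<xi> i) > 0"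
  shows "bounded {p::(real^'n)\<times>real. (\<forall>i. \<xi> i * snd p + 2*(a i \<bullet> fst p) \<le> b i) \<and> fst p \<bullet> fst p \<le> snd p}"
proof -
  define \<eta> where "\<eta> = (\<Sum>i\<in>UNIV. y i * \<xi> i)"
  define \<alpha> where "\<alpha> = (\<Sum>i\<in>UNIV. y i *\<^sub>R a i)"
  define \<beta> where "\<beta> = (\<Sum>i\<in>UNIV. y i * b i)"
  define R where "R = 1 + (\<bar>\<beta>\<bar> + 2 * norm \<alpha>) / \<eta>"
  define S where "S = (\<bar>\<beta>\<bar> + 2 * norm \<alpha> * R) / \<eta>"
  have etap: "\<eta> > 0" using eta \<eta>_def by simp
  have sub: "{p::(real^'n)\<times>real. (\<forall>i. \<xi> i * snd p + 2*(a i \<bullet> fst p) \<le> b i) \<and> fst p \<bullet> fst p \<le> snd p}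
       \<subseteq> cball 0 R \<times> cball 0 S"
  proof (rule subsetI)
    fix p assume pin: "p \<in> {p::(real^'n)\<times>real. (\<forall>i. \<xi> i * snd p + 2*(a i \<bullet> fst p) \<le> b i) \<and> fst p \<bullet> fst p \<le> snd p}"
    obtain x s where pxs: "p = (x, s)" by fastforce
    have c: "\<forall>i. \<xi> i * s + 2 * (a i \<bullet> x) \<le> b i" and q: "x \<bullet> x \<le> s" using pin pxs by auto
    have "(\<Sum>i\<in>UNIV. y i * (\<xi> i * s + 2 * (a i \<bullet> x))) \<le> (\<Sum>i\<in>UNIV. y i * b i)"
      using c y0 by (intro sum_mono mult_left_mono) auto
    also have "(\<Sum>i\<in>UNIV. y i * (\<xi> i * s + 2 * (a i \<bullet> x))) = \<eta> * s + 2 * (\<alpha> \<bullet> x)"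
      unfolding \<eta>_def \<alpha>_def
      by (simp add: algebra_simps sum.distrib sum_distrib_left sum_distrib_right inner_sum_left)
    finally have lin: "\<eta> * s + 2 * (\<alpha> \<bullet> x) \<le> \<beta>" unfolding \<beta>_def .
    define N where "N = norm x"
    have N0: "N \<ge> 0" unfolding N_def by simp
    have NN: "N * N \<le> s" using q unfolding N_def by (simp add: power2_norm_eq_inner[symmetric] power2_eq_square)
    have cs: "- (norm \<alpha> * N) \<le> \<alpha> \<bullet> x" unfolding N_def
      using norm_cauchy_schwarz[of "-\<alpha>" x] by simp
    have key: "\<eta> * s \<le> \<bar>\<beta>\<bar> + 2 * norm \<alpha> * N" using lin cs by linarith
    have etaNN: "\<eta> * (N * N) \<le> \<eta> * s" using NN etap by simp
    have NR: "N \<le> R"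
    proof (cases "N \<le> 1")
      case True
      have "(\<bar>\<beta>\<bar> + 2 * norm \<alpha>) / \<eta> \<ge> 0" using etap by simp
      then show ?thesis using True unfolding R_def by linarith
    next
      case False
      then have N1: "N \<ge> 1" by simp
      have "(\<eta> * N) * N \<le> (\<bar>\<beta>\<bar> + 2 * norm \<alpha>) * N"
      proof -
        have "\<bar>\<beta>\<bar> \<le> \<bar>\<beta>\<bar> * N" using N1 by (simp add: mult_le_cancel_left1)
        then show ?thesis using key etaNN by (simp add: algebra_simps)
      qed
      then have "\<eta> * N \<le> \<bar>\<beta>\<bar> + 2 * norm \<alpha>" using N1 by (simp add: mult_le_cancel_right)
      then have "N \<le> (\<bar>\<beta>\<bar> + 2 * norm \<alpha>) / \<eta>" using etap by (simp add: pos_le_divide_eq mult.commute)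
      then show ?thesis unfolding R_def by linarith
    qed
    have s0: "s \<ge> 0" using NN N0 by (smt (verit) mult_nonneg_nonneg)
    have "\<eta> * s \<le> \<bar>\<beta>\<bar> + 2 * norm \<alpha> * R"
      using key NR by (smt (verit) mult_left_mono norm_ge_zero)
    then have "s \<le> S" unfolding S_def using etap by (simp add: pos_le_divide_eq mult.commute)
    then show "p \<in> cball 0 R \<times> cball 0 S" unfolding pxs using NR s0 unfolding N_def by (simp add: dist_norm)
  qed
  show ?thesis by (rule bounded_subset[OF bounded_Times[OF bounded_cball bounded_cball] sub])
qed

lemma F_expand:
  fixes x u :: "real^'n"
  shows "(\<Sum>j\<in>UNIV. \<delta> j * ((x + e *\<^sub>R u) $ j)\<^sup>2) + 2 * (c \<bullet> (x + e *\<^sub>R u)) + d * (s + e * r)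
    = ((\<Sum>j\<in>UNIV. \<delta> j * (x $ j)\<^sup>2) + 2 * (c \<bullet> x) + d * s)
      + e * ((\<Sum>j\<in>UNIV. 2 * (\<delta> j * x $ j + c $ j) * u $ j) + d * r)
      + e\<^sup>2 * (\<Sum>j\<in>UNIV. \<delta> j * (u $ j)\<^sup>2)"
proof -
  have "\<delta> j * ((x + e *\<^sub>R u) $ j)\<^sup>2 + 2 * (c $ j * (x + e *\<^sub>R u) $ j)
     = (\<delta> j * (x $ j)\<^sup>2 + 2 * (c $ j * x $ j)) + e * (2 * (\<delta> j * x $ j + c $ j) * u $ j)
       + e\<^sup>2 * (\<delta> j * (u $ j)\<^sup>2)" for j
    by (simp add: power2_eq_square algebra_simps)
  then have "(\<Sum>j\<in>UNIV. \<delta> j * ((x + e *\<^sub>R u) $ j)\<^sup>2 + 2 * (c $ j * (x + e *\<^sub>R u) $ j))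
     = (\<Sum>j\<in>UNIV. (\<delta> j * (x $ j)\<^sup>2 + 2 * (c $ j * x $ j)) + e * (2 * (\<delta> j * x $ j + c $ j) * u $ j)
       + e\<^sup>2 * (\<delta> j * (u $ j)\<^sup>2))" by simp
  then show ?thesis
    by (simp add: inner_vec_def sum.distrib sum_distrib_left algebra_simps)
qed

lemma core:
  fixes \<delta> :: "'n::finite \<Rightarrow> real" and c :: "real^'n" and a :: "'m::finite \<Rightarrow> real^'n"
    and b \<xi> y :: "'m \<Rightarrow> real" and d :: real and j1 :: 'n
  assumes \<delta>0: "\<delta> j1 = 0" and \<delta>pos: "\<forall>j. j \<noteq> j1 \<longrightarrow> \<delta> j > 0"
    and y0: "\<forall>i. y i \<ge> 0" and eta: "(\<Sum>i\<in>UNIV. y i * \<xi> i) > 0"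
    and ne: "\<forall>i. \<xi> i * (x0 \<bullet> x0) + 2 * (a i \<bullet> x0) \<le> b i"
    and no_sol: "\<not> (\<exists>(\<mu>::'m \<Rightarrow> real) (xj1::real) (zj1::real).
          d + (\<Sum>i\<in>UNIV. \<mu> i * \<xi> i) = 0 \<and>
          c $ j1 + (\<Sum>i\<in>UNIV. \<mu> i * a i $ j1) = 0 \<and>
          (\<forall>i. \<xi> i * zj1 + (\<Sum>j\<in>UNIV - {j1}. \<xi> i * ((c $ j + (\<Sum>l\<in>UNIV. \<mu> l * a l $ j)) / \<delta> j)\<^sup>2) + 2 * a i $ j1 * xj1
                 - 2 * (\<Sum>j\<in>UNIV - {j1}. a i $ j * ((c $ j + (\<Sum>l\<in>UNIV. \<mu> l * a l $ j)) / \<delta> j)) \<le> b i) \<and>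
          xj1\<^sup>2 \<le> zj1 \<and>
          (\<forall>i. \<mu> i \<ge> 0))"
  shows "\<exists>x. (\<forall>i. \<xi> i * (x \<bullet> x) + 2 * (a i \<bullet> x) \<le> b i) \<and>
            (\<forall>x' s'. (\<forall>i. \<xi> i * s' + 2 * (a i \<bullet> x') \<le> b i) \<and> x' \<bullet> x' \<le> s' \<longrightarrow>
               (\<Sum>j\<in>UNIV. \<delta> j * (x $ j)\<^sup>2) + 2 * (c \<bullet> x) + d * (x \<bullet> x)
               \<le> (\<Sum>j\<in>UNIV. \<delta> j * (x' $ j)\<^sup>2) + 2 * (c \<bullet> x') + d * s')"
proof -
  define F where "F = (\<lambda>(x::real^'n) (s::real). (\<Sum>j\<in>UNIV. \<delta> j * (x $ j)\<^sup>2) + 2 * (c \<bullet> x) + d * s)"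
  define \<Omega> where "\<Omega> = {p::(real^'n)\<times>real. (\<forall>i. \<xi> i * snd p + 2*(a i \<bullet> fst p) \<le> b i) \<and> fst p \<bullet> fst p \<le> snd p}"
  have "closed \<Omega>" unfolding \<Omega>_def
    by (intro closed_Collect_conj closed_Collect_all closed_Collect_le continuous_intros)
  moreover have "bounded \<Omega>" unfolding \<Omega>_def by (rule bounded_region[OF y0 eta])
  ultimately have "compact \<Omega>" by (simp add: compact_eq_bounded_closed)
  moreover have "(x0, x0 \<bullet> x0) \<in> \<Omega>" unfolding \<Omega>_def using ne by simp
  then have "\<Omega> \<noteq> {}" by blast
  moreover have "continuous_on \<Omega> (\<lambda>p. F (fst p) (snd p))" unfolding F_def
    by (intro continuous_intros) 
  ultimately obtain p where pO: "p \<in> \<Omega>" and pmin: "\<forall>q\<in>\<Omega>. F (fst p) (snd p) \<le> F (fst q) (snd q)"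
    using continuous_attains_inf by blast
  obtain x s where pxs: "p = (x, s)" by fastforce
  have lin: "\<forall>i. \<xi> i * s + 2 * (a i \<bullet> x) \<le> b i" and par: "x \<bullet> x \<le> s" using pO pxs \<Omega>_def by auto
  have "s = x \<bullet> x"
  proof (rule ccontr)
    assume "s \<noteq> x \<bullet> x"
    with par have spar: "x \<bullet> x < s" by simp
    define g :: "'m \<Rightarrow> (real^'n) \<times> real" where "g = (\<lambda>i. (2 *\<^sub>R a i, \<xi> i))"
    define gF :: "(real^'n) \<times> real" where "gF = ((\<chi> j. 2 * (\<delta> j * x $ j + c $ j)), d)"
    show False
    proof (cases "\<exists>\<mu>. (\<forall>i. \<mu> i \<ge> 0) \<and> - gF = (\<Sum>i\<in>UNIV. \<mu> i *\<^sub>R g i)")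
      case True
      then obtain \<mu> where \<mu>0: "\<forall>i. \<mu> i \<ge> 0" and h\<mu>: "- gF = (\<Sum>i\<in>UNIV. \<mu> i *\<^sub>R g i)" by blast
      have hs: "- d = (\<Sum>i\<in>UNIV. \<mu> i * \<xi> i)"
        using arg_cong[OF h\<mu>, of snd] by (simp add: snd_sum gF_def g_def)
      have hj: "- (2 * (\<delta> j * x $ j + c $ j)) = (\<Sum>i\<in>UNIV. \<mu> i * (2 * a i $ j))" for j
        using arg_cong[OF h\<mu>, of "\<lambda>v. fst v $ j"] by (simp add: fst_sum sum_component gF_def g_def mult.assoc)
      have key: "\<delta> j * x $ j + (c $ j + (\<Sum>l\<in>UNIV. \<mu> l * a l $ j)) = 0" for j
      proof -
        have "(\<Sum>i\<in>UNIV. \<mu> i * (2 * a i $ j)) = 2 * (\<Sum>i\<in>UNIV. \<mu> i * a i $ j)"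
          by (simp add: sum_distrib_left algebra_simps)
        then show ?thesis using hj[of j] by (simp add: algebra_simps)
      qed
      have w: "(c $ j + (\<Sum>l\<in>UNIV. \<mu> l * a l $ j)) / \<delta> j = - x $ j" if "j \<in> UNIV - {j1}" for j
      proof -
        have "\<delta> j > 0" using \<delta>pos that by auto
        then show ?thesis using key[of j] by (simp add: field_simps)
      qed
      define z where "z = s - (\<Sum>j\<in>UNIV - {j1}. (x $ j)\<^sup>2)"
      have xx: "x \<bullet> x = (x $ j1)\<^sup>2 + (\<Sum>j\<in>UNIV - {j1}. (x $ j)\<^sup>2)"
        unfolding inner_self_sum by (simp add: sum.remove)
      have ax: "a i \<bullet> x = a i $ j1 * x $ j1 + (\<Sum>j\<in>UNIV - {j1}. a i $ j * x $ j)" for i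
        unfolding inner_vec_def by (simp add: sum.remove)
      have "\<exists>(\<mu>::'m \<Rightarrow> real) (xj1::real) (zj1::real).
          d + (\<Sum>i\<in>UNIV. \<mu> i * \<xi> i) = 0 \<and>
          c $ j1 + (\<Sum>i\<in>UNIV. \<mu> i * a i $ j1) = 0 \<and>
          (\<forall>i. \<xi> i * zj1 + (\<Sum>j\<in>UNIV - {j1}. \<xi> i * ((c $ j + (\<Sum>l\<in>UNIV. \<mu> l * a l $ j)) / \<delta> j)\<^sup>2) + 2 * a i $ j1 * xj1
                 - 2 * (\<Sum>j\<in>UNIV - {j1}. a i $ j * ((c $ j + (\<Sum>l\<in>UNIV. \<mu> l * a l $ j)) / \<delta> j)) \<le> b i) \<and>
          xj1\<^sup>2 \<le> zj1 \<and>
          (\<forall>i. \<mu> i \<ge> 0)"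
      proof (intro exI conjI allI)
        show "d + (\<Sum>i\<in>UNIV. \<mu> i * \<xi> i) = 0" using hs by simp
        show "c $ j1 + (\<Sum>i\<in>UNIV. \<mu> i * a i $ j1) = 0" using key[of j1] \<delta>0 by simp
        show "(x $ j1)\<^sup>2 \<le> z" using par xx unfolding z_def by simp
        show "\<mu> i \<ge> 0" for i using \<mu>0 by simp
        fix i
        have e1: "(\<Sum>j\<in>UNIV - {j1}. \<xi> i * ((c $ j + (\<Sum>l\<in>UNIV. \<mu> l * a l $ j)) / \<delta> j)\<^sup>2)
             = \<xi> i * (\<Sum>j\<in>UNIV - {j1}. (x $ j)\<^sup>2)"
          unfolding sum_distrib_left by (rule sum.cong) (simp_all add: w)
        have e2: "(\<Sum>j\<in>UNIV - {j1}. a i $ j * ((c $ j + (\<Sum>l\<in>UNIV. \<mu> l * a l $ j)) / \<delta> j))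
             = - (\<Sum>j\<in>UNIV - {j1}. a i $ j * x $ j)"
          unfolding sum_negf[symmetric] by (rule sum.cong) (simp_all add: w)
        show "\<xi> i * z + (\<Sum>j\<in>UNIV - {j1}. \<xi> i * ((c $ j + (\<Sum>l\<in>UNIV. \<mu> l * a l $ j)) / \<delta> j)\<^sup>2) + 2 * a i $ j1 * x $ j1
                 - 2 * (\<Sum>j\<in>UNIV - {j1}. a i $ j * ((c $ j + (\<Sum>l\<in>UNIV. \<mu> l * a l $ j)) / \<delta> j)) \<le> b i"
          unfolding e1 e2 z_def using lin[rule_format, of i] ax[of i] by (simp add: algebra_simps)
      qed
      then show False using no_sol by blast
    next
      case False
      from farkas_alt[OF False] obtain e where eg: "\<forall>i. inner e (g i) \<le> 0" and ez: "inner e (- gF) > 0"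
        by blast
      obtain u r where eur: "e = (u, r)" by fastforce
      define Q where "Q = (\<Sum>j\<in>UNIV. \<delta> j * (u $ j)\<^sup>2)"
      define G where "G = (\<Sum>j\<in>UNIV. 2 * (\<delta> j * x $ j + c $ j) * u $ j) + d * r"
      have GgF: "G = inner gF e" unfolding G_def gF_def eur by (simp add: inner_vec_def mult.commute)
      have Gneg: "G < 0" using ez GgF by (simp add: inner_commute)
      have ev1: "eventually (\<lambda>t. G + t * Q < 0) (at_right 0)"
      proof -
        have "((\<lambda>t. G + t * Q) \<longlongrightarrow> G + 0 * Q) (at_right 0)" by (intro tendsto_intros)
        then show ?thesis using Gneg order_tendstoD(2) by fastforce
      qed
      have ev2: "eventually (\<lambda>t. (x + t *\<^sub>R u) \<bullet> (x + t *\<^sub>R u) < s + t * r) (at_right 0)"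
      proof -
        have lim0: "((\<lambda>t. (s + t * r) - (x + t *\<^sub>R u) \<bullet> (x + t *\<^sub>R u)) \<longlongrightarrow> (s + 0 * r) - (x + 0 *\<^sub>R u) \<bullet> (x + 0 *\<^sub>R u)) (at_right 0)"
          by (intro tendsto_intros)
        have lim: "((\<lambda>t. (s + t * r) - (x + t *\<^sub>R u) \<bullet> (x + t *\<^sub>R u)) \<longlongrightarrow> s - x \<bullet> x) (at_right 0)"
          using lim0 by simp
        have "0 < s - x \<bullet> x" using spar by simp
        from order_tendstoD(1)[OF lim this]
        show ?thesis by (rule eventually_mono) simp
      qed
      have ev3: "eventually (\<lambda>t::real. t > 0) (at_right 0)" by (simp add: eventually_at_right_less)
      have "eventually (\<lambda>t. G + t * Q < 0 \<and> (x + t *\<^sub>R u) \<bullet> (x + t *\<^sub>R u) < s + t * r \<and> t > 0) (at_right (0::real))"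
        using eventually_conj[OF ev1 eventually_conj[OF ev2 ev3]] by simp
      then obtain t where t1: "G + t * Q < 0" and t2: "(x + t *\<^sub>R u) \<bullet> (x + t *\<^sub>R u) < s + t * r" and t0: "t > 0"
        using eventually_happens'[OF trivial_limit_at_right_real] by blast
      have ing: "\<xi> i * (s + t * r) + 2 * (a i \<bullet> (x + t *\<^sub>R u)) \<le> b i" for i
      proof -
        have "inner e (g i) = 2 * (u \<bullet> a i) + r * \<xi> i" unfolding eur g_def by simp
        then have "2 * (u \<bullet> a i) + r * \<xi> i \<le> 0" using eg by metis
        then have "t * (2 * (u \<bullet> a i) + r * \<xi> i) \<le> 0" using t0 by (simp add: mult_nonneg_nonpos)
        then show ?thesis using lin[rule_format, of i]
          by (simp add: inner_add_right algebra_simps inner_commute)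
      qed
      have qO: "(x + t *\<^sub>R u, s + t * r) \<in> \<Omega>" unfolding \<Omega>_def using ing t2 by simp
      have "F (x + t *\<^sub>R u) (s + t * r) = F x s + t * G + t\<^sup>2 * Q"
        unfolding F_def G_def Q_def by (simp only: split F_expand)
      also have "\<dots> < F x s"
      proof -
        have "t * (G + t * Q) < 0" using t0 t1 by (simp add: mult_pos_neg)
        then show ?thesis by (simp add: power2_eq_square algebra_simps)
      qed
      finally show False using pmin qO pxs by fastforce
    qed
  qed
  show ?thesis
  proof (rule exI[of _ x], rule conjI)
    show "\<forall>i. \<xi> i * (x \<bullet> x) + 2 * (a i \<bullet> x) \<le> b i" using lin \<open>s = x \<bullet> x\<close> by simp
    show "\<forall>x' s'. (\<forall>i. \<xi> i * s' + 2 * (a i \<bullet> x') \<le> b i) \<and> x' \<bullet> x' \<le> s' \<longrightarrow>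
               (\<Sum>j\<in>UNIV. \<delta> j * (x $ j)\<^sup>2) + 2 * (c \<bullet> x) + d * (x \<bullet> x)
               \<le> (\<Sum>j\<in>UNIV. \<delta> j * (x' $ j)\<^sup>2) + 2 * (c \<bullet> x') + d * s'"
    proof (intro allI impI)
    fix x' s' assume "(\<forall>i. \<xi> i * s' + 2 * (a i \<bullet> x') \<le> b i) \<and> x' \<bullet> x' \<le> s'"
    then have "(x', s') \<in> \<Omega>" unfolding \<Omega>_def by simp
    then have "F x s \<le> F x' s'" using pmin pxs by fastforce
    then show "(\<Sum>j\<in>UNIV. \<delta> j * (x $ j)\<^sup>2) + 2 * (c \<bullet> x) + d * (x \<bullet> x)
               \<le> (\<Sum>j\<in>UNIV. \<delta> j * (x' $ j)\<^sup>2) + 2 * (c \<bullet> x') + d * s'"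
      unfolding F_def using \<open>s = x \<bullet> x\<close> by simp
    qed
  qed
qed



theorem mainTheorem7:
  fixes D :: "real^'n^'n" and c :: "real^'n"
    and A :: "'m::finite \<Rightarrow> real^'n^'n" and a :: "'m \<Rightarrow> real^'n" and b :: "'m \<Rightarrow> real"
    and \<xi> :: "'m \<Rightarrow> real" and j1 :: 'n
  assumes D_diag: "diagonal_mat D"
    and A_diag: "\<forall>i. diagonal_mat (A i)"
    and asm1: "assumption1 A a b"
    and A_scalar: "\<forall>i. A i = \<xi> i *\<^sub>R mat 1"
    and j1_min: "D $ j1 $ j1 = (MIN j. D $ j $ j)"
    and j1_unique: "\<forall>j. j \<noteq> j1 \<longrightarrow> D $ j $ j \<noteq> (MIN j. D $ j $ j)"
    and no_sol: "\<not> (\<exists>(\<mu>::'m \<Rightarrow> real) (xj1::real) (zj1::real).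
        (let dstar = (MIN j. D $ j $ j);
             w = (\<lambda>j. (c $ j + (\<Sum>l\<in>UNIV. \<mu> l * a l $ j)) / (D $ j $ j - dstar)) in
          dstar + (\<Sum>i\<in>UNIV. \<mu> i * \<xi> i) = 0 \<and>
          c $ j1 + (\<Sum>i\<in>UNIV. \<mu> i * a i $ j1) = 0 \<and>
          (\<forall>i. \<xi> i * zj1 + (\<Sum>j\<in>UNIV - {j1}. \<xi> i * (w j)\<^sup>2) + 2 * a i $ j1 * xj1
                 - 2 * (\<Sum>j\<in>UNIV - {j1}. a i $ j * w j) \<le> b i) \<and>
          xj1\<^sup>2 \<le> zj1 \<and>
          (\<forall>i. \<mu> i \<ge> 0)))"
  shows "vstar D c A a b = cstar D c A a b"
proof -
  define dstar where "dstar = (MIN j. D $ j $ j)"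
  define \<delta> where "\<delta> = (\<lambda>j. D $ j $ j - dstar)"
  have dle: "dstar \<le> D $ j $ j" for j unfolding dstar_def by (rule Min_le) auto
  have \<delta>0: "\<delta> j1 = 0" unfolding \<delta>_def dstar_def using j1_min by simp
  have \<delta>pos: "\<forall>j. j \<noteq> j1 \<longrightarrow> \<delta> j > 0"
  proof (intro allI impI)
    fix j :: 'n assume "j \<noteq> j1"
    then have "D $ j $ j \<noteq> dstar" using j1_unique unfolding dstar_def by blast
    with dle[of j] show "\<delta> j > 0" unfolding \<delta>_def by simp
  qed
  have \<delta>nn: "\<delta> j \<ge> 0" for j using dle unfolding \<delta>_def by simp
  from asm1 obtain x0 where x0: "x0 \<in> feasP A a b" unfolding assumption1_def by blast
  from asm1 obtain y where y0: "\<forall>i. y i \<ge> 0" and ypd: "pd (\<Sum>i\<in>UNIV. y i *\<^sub>R A i)"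
    unfolding assumption1_def by blast
  have qfA: "qf (A i) (a i) x = \<xi> i * (x \<bullet> x) + 2 * (a i \<bullet> x)" for i x
    unfolding qf_def A_scalar[rule_format] quad_diag[OF scalar_diag] scalar_entry inner_self_sum
    by (simp add: sum_distrib_left)
  have frobA: "frob (A i) X = \<xi> i * (\<Sum>j\<in>UNIV. X $ j $ j)" for i X
    unfolding A_scalar[rule_format] frob_diag[OF scalar_diag] scalar_entry
    by (simp add: sum_distrib_left)
  have qfD: "qf D c x = (\<Sum>j\<in>UNIV. \<delta> j * (x $ j)\<^sup>2) + 2 * (c \<bullet> x) + dstar * (x \<bullet> x)" for x
    unfolding qf_def quad_diag[OF D_diag] inner_self_sum \<delta>_def
    by (simp add: sum_distrib_left algebra_simps sum.distrib sum_subtractf)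
  have eta: "(\<Sum>i\<in>UNIV. y i * \<xi> i) > 0"
  proof -
    define v :: "real^'n" where "v = axis j1 1"
    have "v \<noteq> 0" unfolding v_def by (simp add: axis_eq_0_iff)
    then have "0 < v \<bullet> ((\<Sum>i\<in>UNIV. y i *\<^sub>R A i) *v v)" using ypd unfolding pd_def by blast
    also have "(\<Sum>i\<in>UNIV. y i *\<^sub>R A i) = (\<Sum>i\<in>UNIV. y i * \<xi> i) *\<^sub>R mat 1"
      unfolding A_scalar[rule_format] by (simp add: scaleR_sum_left)
    also have "v \<bullet> (((\<Sum>i\<in>UNIV. y i * \<xi> i) *\<^sub>R mat 1) *v v) = (\<Sum>i\<in>UNIV. y i * \<xi> i)"
    proof -
      have "(\<Sum>j\<in>UNIV. (v $ j)\<^sup>2) = (\<Sum>j\<in>UNIV. if j = j1 then 1 else 0)"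
        by (rule sum.cong) (auto simp: v_def axis_def)
      then have "(\<Sum>j\<in>UNIV. (v $ j)\<^sup>2) = 1" by simp
      then show ?thesis unfolding quad_diag[OF scalar_diag] scalar_entry
        by (simp add: sum_distrib_left[symmetric])
    qed
    finally show ?thesis .
  qed
  have ne: "\<forall>i. \<xi> i * (x0 \<bullet> x0) + 2 * (a i \<bullet> x0) \<le> b i"
    using x0 unfolding feasP_def qfA by simp
  have ns: "\<not> (\<exists>(\<mu>::'m \<Rightarrow> real) (xj1::real) (zj1::real).
          dstar + (\<Sum>i\<in>UNIV. \<mu> i * \<xi> i) = 0 \<and>
          c $ j1 + (\<Sum>i\<in>UNIV. \<mu> i * a i $ j1) = 0 \<and>
          (\<forall>i. \<xi> i * zj1 + (\<Sum>j\<in>UNIV - {j1}. \<xi> i * ((c $ j + (\<Sum>l\<in>UNIV. \<mu> l * a l $ j)) / \<delta> j)\<^sup>2) + 2 * a i $ j1 * xj1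
                 - 2 * (\<Sum>j\<in>UNIV - {j1}. a i $ j * ((c $ j + (\<Sum>l\<in>UNIV. \<mu> l * a l $ j)) / \<delta> j)) \<le> b i) \<and>
          xj1\<^sup>2 \<le> zj1 \<and>
          (\<forall>i. \<mu> i \<ge> 0))"
    using no_sol unfolding Let_def \<delta>_def dstar_def .
  obtain xs where xsF: "\<forall>i. \<xi> i * (xs \<bullet> xs) + 2 * (a i \<bullet> xs) \<le> b i"
    and xsmin: "\<forall>x' s'. (\<forall>i. \<xi> i * s' + 2 * (a i \<bullet> x') \<le> b i) \<and> x' \<bullet> x' \<le> s' \<longrightarrow>
               (\<Sum>j\<in>UNIV. \<delta> j * (xs $ j)\<^sup>2) + 2 * (c \<bullet> xs) + dstar * (xs \<bullet> xs)
               \<le> (\<Sum>j\<in>UNIV. \<delta> j * (x' $ j)\<^sup>2) + 2 * (c \<bullet> x') + dstar * s'"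
    using core[OF \<delta>0 \<delta>pos y0 eta ne ns] by blast
  have xsP: "xs \<in> feasP A a b" unfolding feasP_def qfA using xsF by simp
  have le1: "vstar D c A a b \<le> cstar D c A a b"
    unfolding cstar_def
  proof (rule INF_greatest)
    fix x assume xP: "x \<in> feasP A a b"
    have oin: "(outer x x, x) \<in> feasS A a b"
      unfolding feasS_def
    proof (clarify, intro conjI allI)
      show "symmetric_mat (outer x x)"
        unfolding symmetric_mat_def outer_def transpose_def by (simp add: mult.commute)
      show "psd (outer x x - outer x x)"
        unfolding psd_def symmetric_mat_def by (simp add: transpose_def vec_eq_iff matrix_vector_mult_def inner_vec_def)
      fix i
      have "frob (A i) (outer x x) = \<xi> i * (x \<bullet> x)"
        unfolding frobA outer_def inner_vec_def by simp
      then show "frob (A i) (outer x x) + 2 * (a i \<bullet> x) \<le> b i"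
        using xP unfolding feasP_def qfA by simp
    qed
    have "frob D (outer x x) + 2 * (c \<bullet> x) = qf D c x"
      unfolding qf_def frob_diag[OF D_diag] quad_diag[OF D_diag] outer_def
      by (simp add: power2_eq_square)
    then show "vstar D c A a b \<le> ereal (qf D c x)"
      unfolding vstar_def using INF_lower[OF oin, of "\<lambda>p. ereal (frob D (fst p) + 2 * (c \<bullet> snd p))"] by simp
  qed
  have le2: "cstar D c A a b \<le> vstar D c A a b"
    unfolding vstar_def
  proof (rule INF_greatest)
    fix p assume pS: "p \<in> feasS A a b"
    obtain X x where pXx: "p = (X, x)" by fastforce
    have cons: "\<forall>i. frob (A i) X + 2 * (a i \<bullet> x) \<le> b i" and ps: "psd (X - outer x x)"
      using pS pXx unfolding feasS_def by auto
    define s where "s = (\<Sum>j\<in>UNIV. X $ j $ j)"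
    have diagge: "(x $ j)\<^sup>2 \<le> X $ j $ j" for j
      using psd_diag_nonneg[OF ps, of j] by (simp add: outer_def power2_eq_square)
    have lin: "\<forall>i. \<xi> i * s + 2 * (a i \<bullet> x) \<le> b i" using cons unfolding frobA s_def .
    have par: "x \<bullet> x \<le> s" unfolding inner_self_sum s_def by (intro sum_mono diagge)
    have "frob D X = (\<Sum>j\<in>UNIV. \<delta> j * X $ j $ j) + dstar * s"
      unfolding frob_diag[OF D_diag] \<delta>_def s_def
      by (simp add: algebra_simps sum.distrib sum_distrib_left sum_subtractf)
    moreover have "(\<Sum>j\<in>UNIV. \<delta> j * (x $ j)\<^sup>2) \<le> (\<Sum>j\<in>UNIV. \<delta> j * X $ j $ j)"
      by (intro sum_mono mult_left_mono diagge \<delta>nn)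
    ultimately have "(\<Sum>j\<in>UNIV. \<delta> j * (x $ j)\<^sup>2) + 2 * (c \<bullet> x) + dstar * s \<le> frob D X + 2 * (c \<bullet> x)"
      by simp
    moreover have "qf D c xs \<le> (\<Sum>j\<in>UNIV. \<delta> j * (x $ j)\<^sup>2) + 2 * (c \<bullet> x) + dstar * s"
      unfolding qfD using xsmin lin par by blast
    ultimately have "qf D c xs \<le> frob D (fst p) + 2 * (c \<bullet> snd p)" using pXx by simp
    moreover have "cstar D c A a b \<le> ereal (qf D c xs)"
      unfolding cstar_def using xsP by (rule INF_lower)
    ultimately show "cstar D c A a b \<le> ereal (frob D (fst p) + 2 * (c \<bullet> snd p))"
      using order_trans ereal_less_eq(3) by metis
  qed
  show ?thesis using le1 le2 by simp
qed

end
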